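(* Let $\Phi:I\to O$ be a quantum channel and let $(\mathcal{E},W)$ and $(\mathcal{E}',W')$ be two Stinespring modules related to $\Phi$. Then $$W^*\mathcal{L}(\mathcal{E})W=W'^*\mathcal{L}(\mathcal{E}')W'\subseteq\mathcal{L}(\mathcal{M}_\Phi).$$
   Context: All Hilbert spaces are finite dimensional; inner products are linear in the second variable. $H_{in}=\bigoplus_a H^a_{in}$, $H_{out}=\bigoplus_b H^b_{out}$, $I=\bigoplus_a B(H^a_{in})\subseteq B(H_{in})$, $O=\bigoplus_b B(H^b_{out})\subseteq B(H_{out})$. A quantum channel is a trace-preserving completely positive map $\Phi:I\to O$. $e^a_i$ is an orthonormal basis of $H^a_{in}$, $e^a_{ij}$ the matrix units. $O^{op}$ is the opposite algebra of $O$ (product $a*b=ba$). Hilbert $O^{op}$-modules are right modules with $O^{op}$-valued inner products; $\mathcal{L}(\mathcal{M},\mathcal{N})$ denotes adjointable module maps and $\mathcal{L}(\mathcal{M})=\mathcal{L}(\mathcal{M},\mathcal{M})$. $\mathcal{M}_\Phi=H_{in}\otimes O^{op}$ with $(\xi\otimes a)*x=\xi\otimes(a*x)$ and $\langle\xi\otimes a,\eta\otimes b\rangle_{O^{op}}=\langle\xi,\eta\rangle a^**b$. $C_\Phi\in\mathcal{L}(\mathcal{M}_\Phi)$ is the $O^{op}$-linear map with $C_\Phi(e^a_j\otimes1)=\sum_i e^a_i\otimes\Phi(e^a_{ji})$ (with $\Phi(e^a_{ji})$ viewed in $O^{op}$). A Stinespring module related to $\Phi$ is a pair $(\mathcal{E},W)$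 with $\mathcal{E}$ a Hilbert $O^{op}$-module and $W\in\mathcal{L}(\mathcal{M}_\Phi,\mathcal{E})$ with $W^*W=C_\Phi$. *)

theory Defs
  imports "Jordan_Normal_Form.Matrix"
begin

text \<open>A direct sum of Hilbert spaces with dimensions given by the list ds is
  modelled as C^(sum_list ds), with the standard basis; the global basis index
  k belongs to the block blk ds k.  The algebra of block-diagonal matrices
  bdalg ds is the direct sum of the B(H^a) acting on that space.\<close>

definition blk :: "nat list \<Rightarrow> nat \<Rightarrow> nat" where
  "blk ds k = (LEAST a. k < sum_list (take (Suc a) ds))"

definition bdalg :: "nat list \<Rightarrow> complex mat set" where
  "bdalg ds = {A \<in> carrier_mat (sum_list ds) (sum_list ds).
      \<forall>i < sum_list ds. \<forall>j < sum_list ds. blk ds i \<noteq> blk ds j \<longrightarrow> A $$ (i, j) = 0}"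

definition adjm :: "complex mat \<Rightarrow> complex mat" where
  "adjm A = mat (dim_col A) (dim_row A) (\<lambda>(i, j). cnj (A $$ (j, i)))"

definition psd :: "nat \<Rightarrow> complex mat \<Rightarrow> bool" where
  "psd n A \<longleftrightarrow> A \<in> carrier_mat n n \<and>
     (\<forall>v :: nat \<Rightarrow> complex. (\<Sum>i<n. \<Sum>j<n. cnj (v i) * A $$ (i, j) * v j) \<in> \<real> \<and>
        0 \<le> Re (\<Sum>i<n. \<Sum>j<n. cnj (v i) * A $$ (i, j) * v j))"

text \<open>Matrix unit e_{ij} (global indices) in B(C^n).\<close>
definition munit :: "nat \<Rightarrow> nat \<Rightarrow> nat \<Rightarrow> complex mat" where
  "munit n i j = mat n n (\<lambda>(r, c). if r = i \<and> c = j then 1 else 0)"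

definition blockmat :: "nat \<Rightarrow> nat \<Rightarrow> (nat \<Rightarrow> nat \<Rightarrow> complex mat) \<Rightarrow> complex mat" where
  "blockmat k n X = mat (k * n) (k * n) (\<lambda>(r, c). X (r div n) (c div n) $$ (r mod n, c mod n))"

definition mtrace :: "complex mat \<Rightarrow> complex" where
  "mtrace A = (\<Sum>i<dim_row A. A $$ (i, i))"

text \<open>Phi : I \<rightarrow> O, I = bdalg ns, O = bdalg ms: linear, completely positive
  (Phi \<otimes> id_k positive on M_k(I) for all k) and trace preserving.\<close>
definition quantum_channel ::
  "nat list \<Rightarrow> nat list \<Rightarrow> (complex mat \<Rightarrow> complex mat) \<Rightarrow> bool" where
  "quantum_channel ns ms Phi \<longleftrightarrow>
     (\<forall>A \<in> bdalg ns. Phi A \<in> bdalg ms) \<and>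
     (\<forall>A \<in> bdalg ns. \<forall>B \<in> bdalg ns. Phi (A + B) = Phi A + Phi B) \<and>
     (\<forall>A \<in> bdalg ns. \<forall>c. Phi (c \<cdot>\<^sub>m A) = c \<cdot>\<^sub>m Phi A) \<and>
     (\<forall>k X. (\<forall>p<k. \<forall>q<k. X p q \<in> bdalg ns) \<longrightarrow>
        psd (k * sum_list ns) (blockmat k (sum_list ns) X) \<longrightarrow>
        psd (k * sum_list ms) (blockmat k (sum_list ms) (\<lambda>p q. Phi (X p q)))) \<and>
     (\<forall>A \<in> bdalg ns. mtrace (Phi A) = mtrace A)"

text \<open>A Hilbert module over O^op (O = bdalg ms) on the carrier type 'e:
  additive group 'e, complex scalar multiplication smul, right action act of
  O^op (act x a = x * a, where a * b = b a (matrix product) in O^op), and an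
  O^op-valued inner product inn (values in O; the * of O^op is the matrix
  adjoint, and the positive cone of O^op is that of O).  Completeness is stated
  for the norm x \<mapsto> sqrt (tr <x,x>), which is equivalent to the C*-module
  norm x \<mapsto> ||<x,x>||^(1/2) since O is finite dimensional.\<close>
definition hilbert_opmod ::
  "nat list \<Rightarrow> (complex \<Rightarrow> 'e::ab_group_add \<Rightarrow> 'e) \<Rightarrow> ('e \<Rightarrow> complex mat \<Rightarrow> 'e)
     \<Rightarrow> ('e \<Rightarrow> 'e \<Rightarrow> complex mat) \<Rightarrow> bool" where
  "hilbert_opmod ms smul act inn \<longleftrightarrow>
     \<comment> \<open>complex vector space\<close>
     (\<forall>c x y. smul c (x + y) = smul c x + smul c y) \<and>
     (\<forall>c d x. smul (c + d) x = smul c x + smul d x) \<and>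
     (\<forall>c d x. smul c (smul d x) = smul (c * d) x) \<and>
     (\<forall>x. smul 1 x = x) \<and>
     \<comment> \<open>right O^op-module, compatible with scalars\<close>
     (\<forall>x y. \<forall>a \<in> bdalg ms. act (x + y) a = act x a + act y a) \<and>
     (\<forall>x. \<forall>a \<in> bdalg ms. \<forall>b \<in> bdalg ms. act x (a + b) = act x a + act x b) \<and>
     (\<forall>x. \<forall>a \<in> bdalg ms. \<forall>b \<in> bdalg ms. act (act x a) b = act x (b * a)) \<and>
     (\<forall>c x. \<forall>a \<in> bdalg ms. smul c (act x a) = act (smul c x) a \<and>
                             smul c (act x a) = act x (c \<cdot>\<^sub>m a)) \<and>
     \<comment> \<open>O^op-valued inner product\<close>
     (\<forall>x y. inn x y \<in> bdalg ms) \<and>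
     (\<forall>x y z. inn x (y + z) = inn x y + inn x z) \<and>
     (\<forall>c x y. inn x (smul c y) = c \<cdot>\<^sub>m inn x y) \<and>
     (\<forall>x y. \<forall>a \<in> bdalg ms. inn x (act y a) = a * inn x y) \<and>
     (\<forall>x y. inn y x = adjm (inn x y)) \<and>
     (\<forall>x. psd (sum_list ms) (inn x x)) \<and>
     (\<forall>x. inn x x = 0\<^sub>m (sum_list ms) (sum_list ms) \<longrightarrow> x = 0) \<and>
     \<comment> \<open>completeness\<close>
     (\<forall>s :: nat \<Rightarrow> 'e.
        (\<forall>\<epsilon>>0. \<exists>K. \<forall>p\<ge>K. \<forall>q\<ge>K. Re (mtrace (inn (s p - s q) (s p - s q))) < \<epsilon>) \<longrightarrow>
        (\<exists>x. \<forall>\<epsilon>>0. \<exists>K. \<forall>p\<ge>K. Re (mtrace (inn (s p - x) (s p - x))) < \<epsilon>))"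

definition adjointable :: "('e \<Rightarrow> 'e \<Rightarrow> complex mat) \<Rightarrow> ('e \<Rightarrow> 'e) set" where
  "adjointable inn = {T. \<exists>S. \<forall>x y. inn (T x) y = inn x (S y)}"

definition msum :: "nat \<Rightarrow> nat list \<Rightarrow> (nat \<Rightarrow> complex mat) \<Rightarrow> complex mat" where
  "msum n ks f = foldr (\<lambda>k acc. f k + acc) ks (0\<^sub>m n n)"

text \<open>Via the standard basis e_k of H_in = C^N (N = sum_list ns),
  H_in \<otimes> O^op is identified with N-tuples (x_k)_{k<N} of elements of O,
  sum_k e_k \<otimes> x_k \<mapsto> (x_k).\<close>
definition Mcar :: "nat list \<Rightarrow> nat list \<Rightarrow> (nat \<Rightarrow> complex mat) set" where
  "Mcar ns ms = {x. (\<forall>k < sum_list ns. x k \<in> bdalg ms) \<and>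
                   (\<forall>k \<ge> sum_list ns. x k = 0\<^sub>m (sum_list ms) (sum_list ms))}"

text \<open><xi \<otimes> a, eta \<otimes> b> = <xi,eta> a^* * b = <xi,eta> b a^* (O^op product).\<close>
definition Minn :: "nat list \<Rightarrow> nat list \<Rightarrow> (nat \<Rightarrow> complex mat) \<Rightarrow> (nat \<Rightarrow> complex mat) \<Rightarrow> complex mat" where
  "Minn ns ms x y = msum (sum_list ms) [0..<sum_list ns] (\<lambda>k. y k * adjm (x k))"

definition Ladj_M :: "nat list \<Rightarrow> nat list \<Rightarrow> ((nat \<Rightarrow> complex mat) \<Rightarrow> (nat \<Rightarrow> complex mat)) set" where
  "Ladj_M ns ms = {T \<in> extensional (Mcar ns ms). T ` Mcar ns ms \<subseteq> Mcar ns ms \<and>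
     (\<exists>S. S ` Mcar ns ms \<subseteq> Mcar ns ms \<and>
          (\<forall>x \<in> Mcar ns ms. \<forall>y \<in> Mcar ns ms. Minn ns ms (T x) y = Minn ns ms x (S y)))}"

definition Ladj_ME :: "nat list \<Rightarrow> nat list \<Rightarrow> ('e \<Rightarrow> 'e \<Rightarrow> complex mat)
     \<Rightarrow> ((nat \<Rightarrow> complex mat) \<Rightarrow> 'e) set" where
  "Ladj_ME ns ms inn = {W. \<exists>V. (\<forall>y. V y \<in> Mcar ns ms) \<and>
     (\<forall>x \<in> Mcar ns ms. \<forall>y. inn (W x) y = Minn ns ms x (V y))}"

definition adjME :: "nat list \<Rightarrow> nat list \<Rightarrow> ('e \<Rightarrow> 'e \<Rightarrow> complex mat)
     \<Rightarrow> ((nat \<Rightarrow> complex mat) \<Rightarrow> 'e) \<Rightarrow> 'e \<Rightarrow> (nat \<Rightarrow> complex mat)" where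
  "adjME ns ms inn W = (SOME V. (\<forall>y. V y \<in> Mcar ns ms) \<and>
     (\<forall>x \<in> Mcar ns ms. \<forall>y. inn (W x) y = Minn ns ms x (V y)))"

text \<open>C_Phi: the O^op-linear map with C_Phi(e^a_j \<otimes> 1) = sum_i e^a_i \<otimes> Phi(e^a_{ji}).
  On sum_k e_k \<otimes> x_k = sum_k (e_k \<otimes> 1) * x_k it gives
  sum_k sum_i e_i \<otimes> (Phi(e_{ki}) * x_k) where * is the O^op product, i.e. the
  i-th component is sum over k in the block of i of x_k Phi(e_{ki}).\<close>
definition C_Phi :: "nat list \<Rightarrow> nat list \<Rightarrow> (complex mat \<Rightarrow> complex mat)
     \<Rightarrow> (nat \<Rightarrow> complex mat) \<Rightarrow> (nat \<Rightarrow> complex mat)" where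
  "C_Phi ns ms Phi x = (\<lambda>i. if i < sum_list ns then
      msum (sum_list ms) (filter (\<lambda>k. blk ns k = blk ns i) [0..<sum_list ns])
          (\<lambda>k. x k * Phi (munit (sum_list ns) k i))
      else 0\<^sub>m (sum_list ms) (sum_list ms))"

definition stinespring_module :: "nat list \<Rightarrow> nat list \<Rightarrow> (complex mat \<Rightarrow> complex mat)
     \<Rightarrow> (complex \<Rightarrow> 'e::ab_group_add \<Rightarrow> 'e) \<Rightarrow> ('e \<Rightarrow> complex mat \<Rightarrow> 'e)
     \<Rightarrow> ('e \<Rightarrow> 'e \<Rightarrow> complex mat) \<Rightarrow> ((nat \<Rightarrow> complex mat) \<Rightarrow> 'e) \<Rightarrow> bool" where
  "stinespring_module ns ms Phi smul act inn W \<longleftrightarrow>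
     hilbert_opmod ms smul act inn \<and> W \<in> Ladj_ME ns ms inn \<and>
     (\<forall>x \<in> Mcar ns ms. adjME ns ms inn W (W x) = C_Phi ns ms Phi x)"

definition compress :: "nat list \<Rightarrow> nat list \<Rightarrow> ('e \<Rightarrow> 'e \<Rightarrow> complex mat)
     \<Rightarrow> ((nat \<Rightarrow> complex mat) \<Rightarrow> 'e) \<Rightarrow> ((nat \<Rightarrow> complex mat) \<Rightarrow> (nat \<Rightarrow> complex mat)) set" where
  "compress ns ms inn W =
     (\<lambda>T. restrict (\<lambda>x. adjME ns ms inn W (T (W x))) (Mcar ns ms)) ` adjointable inn"

end

theory Submission
  imports Defs "HOL-Library.Function_Algebras"
begin


lemma fun_sum_apply: "(sum f A) x = sum (\<lambda>a. f a x) A"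
  by (induct A rule: infinite_finite_induct) auto

lemma msum_carrier_entry:
  assumes "\<And>k. k \<in> set ks \<Longrightarrow> f k \<in> carrier_mat n n"
  shows "msum n ks f \<in> carrier_mat n n \<and>
    (\<forall>r c. r < n \<longrightarrow> c < n \<longrightarrow> msum n ks f $$ (r,c) = sum_list (map (\<lambda>k. f k $$ (r,c)) ks))"
  using assms
proof (induct ks)
  case Nil
  then show ?case by (simp add: msum_def)
next
  case (Cons a ks)
  then have IH: "msum n ks f \<in> carrier_mat n n"
    "\<And>r c. r < n \<Longrightarrow> c < n \<Longrightarrow> msum n ks f $$ (r,c) = sum_list (map (\<lambda>k. f k $$ (r,c)) ks)"
    and fa: "f a \<in> carrier_mat n n" by auto
  have e: "msum n (a # ks) f = f a + msum n ks f" by (simp add: msum_def)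
  show ?case unfolding e using IH fa by auto
qed

lemma adjm_carrier: "adjm A \<in> carrier_mat (dim_col A) (dim_row A)"
  by (simp add: adjm_def)

lemma adjm_index: "i < dim_col A \<Longrightarrow> j < dim_row A \<Longrightarrow> adjm A $$ (i,j) = cnj (A $$ (j,i))"
  by (simp add: adjm_def)

lemma adjm_adjm: "A \<in> carrier_mat n k \<Longrightarrow> adjm (adjm A) = A"
  by (auto simp: adjm_def intro!: eq_matI)

definition Iset :: "nat \<Rightarrow> nat \<Rightarrow> (nat \<times> nat) set" where
  "Iset N m = {..<N} \<times> {..<m}"

lemma finite_Iset[simp]: "finite (Iset N m)" by (simp add: Iset_def)

lemma Minn_entry:
  assumes x: "\<And>k. k < sum_list ns \<Longrightarrow> x k \<in> carrier_mat (sum_list ms) (sum_list ms)"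
    and y: "\<And>k. k < sum_list ns \<Longrightarrow> y k \<in> carrier_mat (sum_list ms) (sum_list ms)"
  shows "Minn ns ms x y \<in> carrier_mat (sum_list ms) (sum_list ms)"
    "r < sum_list ms \<Longrightarrow> c < sum_list ms \<Longrightarrow> Minn ns ms x y $$ (r,c) =
        (\<Sum>z\<in>Iset (sum_list ns) (sum_list ms). y (fst z) $$ (r, snd z) * cnj (x (fst z) $$ (c, snd z)))"
proof -
  let ?m = "sum_list ms" and ?N = "sum_list ns"
  have F: "\<And>k. k \<in> set [0..<?N] \<Longrightarrow> y k * adjm (x k) \<in> carrier_mat ?m ?m"
  proof -
    fix k assume "k \<in> set [0..<?N]"
    then have "k < ?N" by simp
    then show "y k * adjm (x k) \<in> carrier_mat ?m ?m"
      using x[of k] y[of k] adjm_carrier[of "x k"] by auto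
  qed
  note M = msum_carrier_entry[of "[0..<?N]" "\<lambda>k. y k * adjm (x k)" ?m, OF F]
  show "Minn ns ms x y \<in> carrier_mat ?m ?m" using M by (simp add: Minn_def)
  assume rc: "r < ?m" "c < ?m"
  have "Minn ns ms x y $$ (r,c) = (\<Sum>k<?N. (y k * adjm (x k)) $$ (r,c))"
    using M rc by (simp add: Minn_def sum_list_distinct_conv_sum_set atLeast0LessThan)
  also have "\<dots> = (\<Sum>k<?N. \<Sum>s<?m. y k $$ (r, s) * cnj (x k $$ (c, s)))"
  proof (rule sum.cong[OF refl])
    fix k assume "k \<in> {..<?N}"
    then have xk: "x k \<in> carrier_mat ?m ?m" and yk: "y k \<in> carrier_mat ?m ?m" using x y by auto
    show "(y k * adjm (x k)) $$ (r,c) = (\<Sum>s<?m. y k $$ (r, s) * cnj (x k $$ (c, s)))"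
      using xk yk rc adjm_carrier[of "x k"]
      by (auto simp: scalar_prod_def adjm_index atLeast0LessThan intro!: sum.cong)
  qed
  also have "\<dots> = (\<Sum>z\<in>Iset ?N ?m. y (fst z) $$ (r, snd z) * cnj (x (fst z) $$ (c, snd z)))"
    unfolding Iset_def sum.cartesian_product by (simp add: case_prod_beta)
  finally show "Minn ns ms x y $$ (r,c) = (\<Sum>z\<in>Iset ?N ?m. y (fst z) $$ (r, snd z) * cnj (x (fst z) $$ (c, snd z)))" .
qed
lemma Mcar_carrier: "x \<in> Mcar ns ms \<Longrightarrow> k < sum_list ns \<Longrightarrow> x k \<in> carrier_mat (sum_list ms) (sum_list ms)"
  by (simp add: Mcar_def bdalg_def)

lemma Mcar_out: "x \<in> Mcar ns ms \<Longrightarrow> \<not> k < sum_list ns \<Longrightarrow> x k = 0\<^sub>m (sum_list ms) (sum_list ms)"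
  by (simp add: Mcar_def)

lemma Minn_entry_M:
  assumes "x \<in> Mcar ns ms" "y \<in> Mcar ns ms"
  shows "Minn ns ms x y \<in> carrier_mat (sum_list ms) (sum_list ms)"
    "r < sum_list ms \<Longrightarrow> c < sum_list ms \<Longrightarrow> Minn ns ms x y $$ (r,c) =
        (\<Sum>z\<in>Iset (sum_list ns) (sum_list ms). y (fst z) $$ (r, snd z) * cnj (x (fst z) $$ (c, snd z)))"
proof -
  have X: "\<And>k. k < sum_list ns \<Longrightarrow> x k \<in> carrier_mat (sum_list ms) (sum_list ms)"
    and Y: "\<And>k. k < sum_list ns \<Longrightarrow> y k \<in> carrier_mat (sum_list ms) (sum_list ms)"
    using assms Mcar_carrier by blast+
  show "Minn ns ms x y \<in> carrier_mat (sum_list ms) (sum_list ms)" by (rule Minn_entry(1)[OF X Y])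
  show "r < sum_list ms \<Longrightarrow> c < sum_list ms \<Longrightarrow> Minn ns ms x y $$ (r,c) =
        (\<Sum>z\<in>Iset (sum_list ns) (sum_list ms). y (fst z) $$ (r, snd z) * cnj (x (fst z) $$ (c, snd z)))"
    by (rule Minn_entry(2)[OF X Y])
qed

lemma Mcar_eqI:
  assumes "a \<in> Mcar ns ms" "b \<in> Mcar ns ms"
    and "\<And>i r c. i < sum_list ns \<Longrightarrow> r < sum_list ms \<Longrightarrow> c < sum_list ms \<Longrightarrow> a i $$ (r,c) = b i $$ (r,c)"
  shows "a = b"
proof
  fix i show "a i = b i"
  proof (cases "i < sum_list ns")
    case True
    then show ?thesis using Mcar_carrier[OF assms(1) True] Mcar_carrier[OF assms(2) True] assms(3)[OF True]
      by (intro eq_matI) auto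
  next
    case False
    then show ?thesis using Mcar_out[OF assms(1)] Mcar_out[OF assms(2)] by simp
  qed
qed

lemma Minn_adjm:
  assumes "x \<in> Mcar ns ms" "y \<in> Mcar ns ms"
  shows "adjm (Minn ns ms x y) = Minn ns ms y x"
proof -
  note C1 = Minn_entry_M[where ns=ns and ms=ms and x="x" and y="y", OF assms(1) assms(2)]
  note C2 = Minn_entry_M[where ns=ns and ms=ms and x="y" and y="x", OF assms(2) assms(1)]
  show ?thesis
  proof (rule eq_matI)
    fix i j assume ij: "i < dim_row (Minn ns ms y x)" "j < dim_col (Minn ns ms y x)"
    then have ij': "i < sum_list ms" "j < sum_list ms" using C2(1) by auto
    have "adjm (Minn ns ms x y) $$ (i,j) = cnj (Minn ns ms x y $$ (j,i))"
      using C1(1) ij' by (simp add: adjm_index)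
    also have "\<dots> = Minn ns ms y x $$ (i,j)" using C1(2)[OF ij'(2,1)] C2(2)[OF ij'] by (simp add: mult.commute)
    finally show "adjm (Minn ns ms x y) $$ (i,j) = Minn ns ms y x $$ (i,j)" .
  qed (use C1(1) C2(1) adjm_carrier[of "Minn ns ms x y"] in auto)
qed

lemma Minn_self_zero:
  assumes x: "x \<in> Mcar ns ms" and z: "Minn ns ms x x = 0\<^sub>m (sum_list ms) (sum_list ms)"
  shows "x = (\<lambda>k. 0\<^sub>m (sum_list ms) (sum_list ms))"
proof -
  let ?m = "sum_list ms" and ?N = "sum_list ns"
  note C = Minn_entry_M[where ns=ns and ms=ms and x="x" and y="x", OF x x]
  have zero: "x k $$ (r,s) = 0" if k: "k < ?N" and r: "r < ?m" and s: "s < ?m" for k r s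
  proof -
    have "(\<Sum>z\<in>Iset ?N ?m. x (fst z) $$ (r, snd z) * cnj (x (fst z) $$ (r, snd z))) = 0"
      using C(2)[OF r r] z r by simp
    then have "(\<Sum>z\<in>Iset ?N ?m. complex_of_real ((cmod (x (fst z) $$ (r, snd z)))\<^sup>2)) = 0"
      by (simp only: complex_norm_square)
    then have "complex_of_real (\<Sum>z\<in>Iset ?N ?m. (cmod (x (fst z) $$ (r, snd z)))\<^sup>2) = 0"
      by (simp only: of_real_sum)
    then have "(\<Sum>z\<in>Iset ?N ?m. (cmod (x (fst z) $$ (r, snd z)))\<^sup>2) = 0" by (simp only: of_real_eq_0_iff)
    then have "\<forall>z\<in>Iset ?N ?m. (cmod (x (fst z) $$ (r, snd z)))\<^sup>2 = 0"
      by (subst (asm) sum_nonneg_eq_0_iff) auto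
    moreover have "(k,s) \<in> Iset ?N ?m" using k s by (simp add: Iset_def)
    ultimately have "(cmod (x k $$ (r, s)))\<^sup>2 = 0" by (metis fst_conv snd_conv)
    then show ?thesis by simp
  qed
  show ?thesis
  proof
    fix k show "x k = 0\<^sub>m ?m ?m"
    proof (cases "k < ?N")
      case True
      then show ?thesis using Mcar_carrier[OF x True] zero[OF True] by (intro eq_matI) auto
    qed (use Mcar_out[OF x] in auto)
  qed
qed

definition tsub :: "(nat \<Rightarrow> complex mat) \<Rightarrow> (nat \<Rightarrow> complex mat) \<Rightarrow> nat \<Rightarrow> complex mat" where
  "tsub a b = (\<lambda>k. a k - b k)"

lemma bdalg_iff: "A \<in> bdalg ms \<longleftrightarrow> A \<in> carrier_mat (sum_list ms) (sum_list ms) \<and>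
   (\<forall>i<sum_list ms. \<forall>j<sum_list ms. blk ms i \<noteq> blk ms j \<longrightarrow> A $$ (i, j) = 0)"
  by (simp add: bdalg_def)

lemma tsub_Mcar: "a \<in> Mcar ns ms \<Longrightarrow> b \<in> Mcar ns ms \<Longrightarrow> tsub a b \<in> Mcar ns ms"
  unfolding Mcar_def tsub_def bdalg_iff by (auto intro!: minus_carrier_mat)

lemma Minn_nondeg:
  assumes a: "a \<in> Mcar ns ms" and b: "b \<in> Mcar ns ms"
    and eq: "\<And>z. z \<in> Mcar ns ms \<Longrightarrow> Minn ns ms z a = Minn ns ms z b"
  shows "a = b"
proof -
  let ?m = "sum_list ms" and ?N = "sum_list ns"
  let ?z = "tsub a b"
  have zM: "?z \<in> Mcar ns ms" using tsub_Mcar[OF a b] .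
  note Ca = Minn_entry_M[where ns=ns and ms=ms and x="?z" and y="a", OF zM a]
  note Cb = Minn_entry_M[where ns=ns and ms=ms and x="?z" and y="b", OF zM b]
  note Cz = Minn_entry_M[where ns=ns and ms=ms and x="?z" and y="?z", OF zM zM]
  have "Minn ns ms ?z ?z = 0\<^sub>m ?m ?m"
  proof (rule eq_matI)
    fix r c assume rc: "r < dim_row (0\<^sub>m ?m ?m :: complex mat)" "c < dim_col (0\<^sub>m ?m ?m :: complex mat)"
    then have rc': "r < ?m" "c < ?m" by auto
    have "Minn ns ms ?z ?z $$ (r,c) = Minn ns ms ?z a $$ (r,c) - Minn ns ms ?z b $$ (r,c)"
      unfolding Ca(2)[OF rc'] Cb(2)[OF rc'] Cz(2)[OF rc'] sum_subtractf[symmetric]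
    proof (rule sum.cong[OF refl])
      fix w assume "w \<in> Iset ?N ?m"
      then have w: "fst w < ?N" "snd w < ?m" by (auto simp: Iset_def)
      show "?z (fst w) $$ (r, snd w) * cnj (?z (fst w) $$ (c, snd w)) =
         a (fst w) $$ (r, snd w) * cnj (?z (fst w) $$ (c, snd w)) - b (fst w) $$ (r, snd w) * cnj (?z (fst w) $$ (c, snd w))"
        using Mcar_carrier[OF a w(1)] Mcar_carrier[OF b w(1)] w rc' by (simp add: tsub_def algebra_simps)
    qed
    also have "\<dots> = 0" using eq[OF zM] by simp
    finally show "Minn ns ms ?z ?z $$ (r,c) = 0\<^sub>m ?m ?m $$ (r,c)" using rc' by simp
  qed (use Cz(1) in auto)
  then have "?z = (\<lambda>k. 0\<^sub>m ?m ?m)" using Minn_self_zero[OF zM] by simp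
  show "a = b"
  proof (rule Mcar_eqI[OF a b])
    fix i r c assume "i < ?N" "r < ?m" "c < ?m"
    note irc = this
    have "(a i - b i) $$ (r,c) = 0"
      using fun_cong[OF \<open>?z = _\<close>, of i] irc by (simp add: tsub_def)
    then show "a i $$ (r,c) = b i $$ (r,c)"
      using Mcar_carrier[OF a irc(1)] Mcar_carrier[OF b irc(1)] irc by simp
  qed
qed



type_synonym kern = "nat \<times> nat \<Rightarrow> nat \<times> nat \<Rightarrow> complex"

definition kmul :: "(nat \<times> nat) set \<Rightarrow> kern \<Rightarrow> kern \<Rightarrow> kern" where
  "kmul I p q = (\<lambda>a b. \<Sum>c\<in>I. p a c * q c b)"

definition kid :: kern where "kid = (\<lambda>a b. if a = b then 1 else 0)"

fun kpow :: "(nat \<times> nat) set \<Rightarrow> kern \<Rightarrow> nat \<Rightarrow> kern" where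
  "kpow I p 0 = kid"
| "kpow I p (Suc j) = kmul I (kpow I p j) p"

definition actk :: "nat \<Rightarrow> nat \<Rightarrow> kern \<Rightarrow> (nat \<Rightarrow> complex mat) \<Rightarrow> nat \<Rightarrow> complex mat" where
  "actk N m p x = (\<lambda>i. if i < N then mat m m (\<lambda>(r,c). \<Sum>z\<in>Iset N m. x (fst z) $$ (r, snd z) * p z (i,c))
      else 0\<^sub>m m m)"

lemma actk_entry: "i < N \<Longrightarrow> r < m \<Longrightarrow> c < m \<Longrightarrow>
   actk N m p x i $$ (r,c) = (\<Sum>z\<in>Iset N m. x (fst z) $$ (r, snd z) * p z (i,c))"
  by (simp add: actk_def)

lemma actk_carrier: "actk N m p x i \<in> carrier_mat m m"
  by (simp add: actk_def)

lemma actk_out: "\<not> i < N \<Longrightarrow> actk N m p x i = 0\<^sub>m m m"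
  by (simp add: actk_def)

lemma Iset_D: "z \<in> Iset N m \<Longrightarrow> fst z < N \<and> snd z < m"
  by (auto simp: Iset_def)

lemma actk_kmul: "actk N m (kmul (Iset N m) p q) x = actk N m q (actk N m p x)"
proof
  fix i
  show "actk N m (kmul (Iset N m) p q) x i = actk N m q (actk N m p x) i"
  proof (cases "i < N")
    case True
    show ?thesis
    proof (rule eq_matI)
      fix r c assume "r < dim_row (actk N m q (actk N m p x) i)" "c < dim_col (actk N m q (actk N m p x) i)"
      then have rc: "r < m" "c < m" using actk_carrier[of N m q "actk N m p x" i] by auto
      have "actk N m q (actk N m p x) i $$ (r,c) =
          (\<Sum>z\<in>Iset N m. (\<Sum>w\<in>Iset N m. x (fst w) $$ (r, snd w) * p w z) * q z (i,c))"
        unfolding actk_entry[OF True rc]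
        by (rule sum.cong[OF refl]) (use Iset_D rc in \<open>simp add: actk_entry\<close>)
      also have "\<dots> = (\<Sum>z\<in>Iset N m. \<Sum>w\<in>Iset N m. x (fst w) $$ (r, snd w) * (p w z * q z (i,c)))"
        by (simp add: sum_distrib_right mult.assoc)
      also have "\<dots> = (\<Sum>w\<in>Iset N m. \<Sum>z\<in>Iset N m. x (fst w) $$ (r, snd w) * (p w z * q z (i,c)))"
        by (rule sum.swap)
      also have "\<dots> = (\<Sum>w\<in>Iset N m. x (fst w) $$ (r, snd w) * (\<Sum>z\<in>Iset N m. p w z * q z (i,c)))"
        by (simp add: sum_distrib_left)
      also have "\<dots> = actk N m (kmul (Iset N m) p q) x i $$ (r,c)"
        unfolding actk_entry[OF True rc] kmul_def by simp
      finally show "actk N m (kmul (Iset N m) p q) x i $$ (r,c) = actk N m q (actk N m p x) i $$ (r,c)" by simp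
    qed (simp_all add: actk_def)
  qed (simp add: actk_out)
qed

lemma actk_kid:
  assumes "\<And>k. k < N \<Longrightarrow> x k \<in> carrier_mat m m" "\<And>k. \<not> k < N \<Longrightarrow> x k = 0\<^sub>m m m"
  shows "actk N m kid x = x"
proof
  fix i
  show "actk N m kid x i = x i"
  proof (cases "i < N")
    case True
    show ?thesis
    proof (rule eq_matI)
      fix r c assume "r < dim_row (x i)" "c < dim_col (x i)"
      then have rc: "r < m" "c < m" using assms(1)[OF True] by auto
      have "(\<Sum>z\<in>Iset N m. x (fst z) $$ (r, snd z) * kid z (i,c)) =
            (\<Sum>z\<in>Iset N m. if z = (i,c) then x i $$ (r, c) else 0)"
        by (rule sum.cong) (auto simp: kid_def)
      also have "\<dots> = x i $$ (r,c)" using True rc by (simp add: Iset_def)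
      finally show "actk N m kid x i $$ (r,c) = x i $$ (r,c)" using actk_entry[OF True rc] by simp
    qed (use assms(1)[OF True] in \<open>simp_all add: actk_def\<close>)
  qed (simp add: actk_out assms(2))
qed

lemma actk_lin:
  assumes "\<And>i r s. i < N \<Longrightarrow> r < m \<Longrightarrow> s < m \<Longrightarrow> y i $$ (r,s) = (\<Sum>j\<in>J. d j * Y j i $$ (r,s))"
    and "i < N" "r < m" "s < m"
  shows "actk N m p y i $$ (r,s) = (\<Sum>j\<in>J. d j * actk N m p (Y j) i $$ (r,s))"
proof -
  have "actk N m p y i $$ (r,s) = (\<Sum>z\<in>Iset N m. (\<Sum>j\<in>J. d j * Y j (fst z) $$ (r, snd z)) * p z (i,s))"
    unfolding actk_entry[OF assms(2-4)]
    by (rule sum.cong[OF refl]) (use Iset_D assms in simp)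
  also have "\<dots> = (\<Sum>z\<in>Iset N m. \<Sum>j\<in>J. d j * (Y j (fst z) $$ (r, snd z) * p z (i,s)))"
    by (simp add: sum_distrib_right mult.assoc)
  also have "\<dots> = (\<Sum>j\<in>J. \<Sum>z\<in>Iset N m. d j * (Y j (fst z) $$ (r, snd z) * p z (i,s)))"
    by (rule sum.swap)
  also have "\<dots> = (\<Sum>j\<in>J. d j * (\<Sum>z\<in>Iset N m. Y j (fst z) $$ (r, snd z) * p z (i,s)))"
    by (simp add: sum_distrib_left)
  also have "\<dots> = (\<Sum>j\<in>J. d j * actk N m p (Y j) i $$ (r,s))"
    using actk_entry[OF assms(2-4)] by simp
  finally show ?thesis .
qed

lemma kpow_dependent:
  assumes fin: "finite I"
  shows "\<exists>c L. (\<exists>j\<le>L. c j \<noteq> 0) \<and> (\<forall>a\<in>I. \<forall>b\<in>I. (\<Sum>j\<le>L. c j * kpow I p j a b) = 0)"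
proof -
  interpret V: vector_space "\<lambda>(c::complex) (f::(nat \<times> nat) \<times> (nat \<times> nat) \<Rightarrow> complex) z. c * f z"
    by unfold_locales (auto simp: fun_eq_iff algebra_simps)
  define vk :: "kern \<Rightarrow> (nat \<times> nat) \<times> (nat \<times> nat) \<Rightarrow> complex" where
    "vk q = (\<lambda>z. if fst z \<in> I \<and> snd z \<in> I then q (fst z) (snd z) else 0)" for q
  define dl :: "(nat \<times> nat) \<times> (nat \<times> nat) \<Rightarrow> (nat \<times> nat) \<times> (nat \<times> nat) \<Rightarrow> complex" where
    "dl z0 = (\<lambda>z. if z = z0 then 1 else 0)" for z0
  define L where "L = card (I \<times> I)"
  define B where "B = dl ` (I \<times> I)"
  have finB: "finite B" using fin by (simp add: B_def)
  have cardB: "card B \<le> L" unfolding B_def L_def by (rule card_image_le) (use fin in simp)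
  have span: "vk q \<in> V.span B" for q
  proof -
    have "vk q = (\<Sum>z0\<in>I \<times> I. (\<lambda>z. vk q z0 * dl z0 z))"
    proof
      fix z
      show "vk q z = (\<Sum>z0\<in>I \<times> I. (\<lambda>z. vk q z0 * dl z0 z)) z"
        unfolding fun_sum_apply
      proof (cases "z \<in> I \<times> I")
        case True
        then show "vk q z = (\<Sum>z0\<in>I \<times> I. vk q z0 * dl z0 z)"
          using fin by (simp add: dl_def if_distrib[of "\<lambda>x. _ * x"] cong: if_cong)
      next
        case False
        then have "vk q z = 0" by (auto simp: vk_def mem_Times_iff)
        moreover have "(\<Sum>z0\<in>I \<times> I. vk q z0 * dl z0 z) = 0"
          by (rule sum.neutral) (use False in \<open>auto simp: dl_def\<close>)
        ultimately show "vk q z = (\<Sum>z0\<in>I \<times> I. vk q z0 * dl z0 z)" by simp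
      qed
    qed
    also have "\<dots> \<in> V.span B"
    proof (rule V.span_sum)
      fix z0 assume "z0 \<in> I \<times> I"
      then have "dl z0 \<in> V.span B" unfolding B_def by (intro V.span_base) simp
      from V.span_scale[OF this, of "vk q z0"] show "(\<lambda>z. vk q z0 * dl z0 z) \<in> V.span B" by simp
    qed
    finally show ?thesis .
  qed
  show ?thesis
  proof (cases "inj_on (\<lambda>j. vk (kpow I p j)) {..L}")
    case True
    define T where "T = (\<lambda>j. vk (kpow I p j)) ` {..L}"
    have cardT: "card T = Suc L" unfolding T_def using card_image[OF True] by simp
    have finT: "finite T" unfolding T_def by simp
    have "\<not> V.independent T"
    proof
      assume "V.independent T"
      then have "card T \<le> card B"
        using V.independent_span_bound[OF finB, of T] span by (auto simp: T_def)
      then show False using cardT cardB by simp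
    qed
    then obtain u where u: "\<exists>v\<in>T. u v \<noteq> 0" "(\<Sum>v\<in>T. (\<lambda>z. u v * v z)) = 0"
      using V.dependent_finite[OF finT] by auto
    define c where "c j = u (vk (kpow I p j))" for j
    have "\<exists>j\<le>L. c j \<noteq> 0" using u(1) by (auto simp: T_def c_def)
    moreover have "(\<Sum>j\<le>L. c j * kpow I p j a b) = 0" if ab: "a \<in> I" "b \<in> I" for a b
    proof -
      have "(\<Sum>j\<le>L. c j * kpow I p j a b) = (\<Sum>j\<le>L. u (vk (kpow I p j)) * vk (kpow I p j) (a,b))"
        using ab by (simp add: c_def vk_def)
      also have "\<dots> = (\<Sum>v\<in>T. u v * v (a,b))"
        unfolding T_def by (subst sum.reindex[OF True]) simp
      also have "\<dots> = (\<Sum>v\<in>T. (\<lambda>z. u v * v z)) (a,b)" by (simp add: fun_sum_apply)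
      also have "\<dots> = 0" using u(2) by simp
      finally show ?thesis .
    qed
    ultimately show ?thesis by blast
  next
    case False
    then obtain i j where ij: "i \<le> L" "j \<le> L" "i \<noteq> j" "vk (kpow I p i) = vk (kpow I p j)"
      unfolding inj_on_def by auto
    define c where "c t = (if t = i then 1 else 0) - (if t = j then 1 else (0::complex))" for t
    have "c i \<noteq> 0" using ij by (simp add: c_def)
    moreover have "(\<Sum>t\<le>L. c t * kpow I p t a b) = 0" if ab: "a \<in> I" "b \<in> I" for a b
    proof -
      have "(\<Sum>t\<le>L. c t * kpow I p t a b) = kpow I p i a b - kpow I p j a b"
        using ij by (simp add: c_def left_diff_distrib sum_subtractf if_distrib[of "\<lambda>x. x * _"] cong: if_cong)
      also have "\<dots> = 0" using fun_cong[OF ij(4), of "(a,b)"] ab by (simp add: vk_def)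
      finally show ?thesis .
    qed
    ultimately show ?thesis using ij(1) by blast
  qed
qed



definition kap :: "nat list \<Rightarrow> nat list \<Rightarrow> (complex mat \<Rightarrow> complex mat) \<Rightarrow> kern" where
  "kap ns ms Phi = (\<lambda>a b. if blk ns (fst a) = blk ns (fst b)
      then Phi (munit (sum_list ns) (fst a) (fst b)) $$ (snd a, snd b) else 0)"

definition tlc :: "nat list \<Rightarrow> nat list \<Rightarrow> (complex mat \<Rightarrow> complex mat) \<Rightarrow> (nat \<Rightarrow> complex) \<Rightarrow> nat set
   \<Rightarrow> (nat \<Rightarrow> complex mat) \<Rightarrow> nat \<Rightarrow> complex mat" where
  "tlc ns ms Phi d J x = (\<lambda>i. if i < sum_list ns then mat (sum_list ms) (sum_list ms)
      (\<lambda>(r,s). \<Sum>j\<in>J. d j * (C_Phi ns ms Phi ^^ j) x i $$ (r,s)) else 0\<^sub>m (sum_list ms) (sum_list ms))"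

lemma munit_bdalg: "k < sum_list ns \<Longrightarrow> i < sum_list ns \<Longrightarrow> blk ns k = blk ns i \<Longrightarrow> munit (sum_list ns) k i \<in> bdalg ns"
  unfolding bdalg_def munit_def by auto

lemma zero_Mcar: "(\<lambda>k. 0\<^sub>m (sum_list ms) (sum_list ms)) \<in> Mcar ns ms"
  by (simp add: Mcar_def bdalg_def)

locale stm =
  fixes ns ms :: "nat list" and Phi :: "complex mat \<Rightarrow> complex mat"
    and smul :: "complex \<Rightarrow> 'e::ab_group_add \<Rightarrow> 'e" and act :: "'e \<Rightarrow> complex mat \<Rightarrow> 'e"
    and inn :: "'e \<Rightarrow> 'e \<Rightarrow> complex mat" and W :: "(nat \<Rightarrow> complex mat) \<Rightarrow> 'e"
  assumes qc: "quantum_channel ns ms Phi" and st: "stinespring_module ns ms Phi smul act inn W"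
begin

abbreviation "N \<equiv> sum_list ns"
abbreviation "mm \<equiv> sum_list ms"
abbreviation "V \<equiv> adjME ns ms inn W"
abbreviation "C \<equiv> C_Phi ns ms Phi"
abbreviation "z0 \<equiv> (\<lambda>k::nat. 0\<^sub>m mm mm :: complex mat)"

lemma hm: "hilbert_opmod ms smul act inn" using st by (simp add: stinespring_module_def)

lemma inn_bd: "inn x y \<in> bdalg ms"
proof -
  have "\<forall>x y. inn x y \<in> bdalg ms" using hm unfolding hilbert_opmod_def by (elim conjE) assumption
  then show ?thesis by blast
qed
lemma inn_car: "inn x y \<in> carrier_mat mm mm" using inn_bd by (simp add: bdalg_def)
lemma inn_add: "inn x (y + z) = inn x y + inn x z"
proof -
  have "\<forall>x y z. inn x (y + z) = inn x y + inn x z" using hm unfolding hilbert_opmod_def by (elim conjE) assumption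
  then show ?thesis by blast
qed
lemma inn_sym: "inn y x = adjm (inn x y)"
proof -
  have "\<forall>x y. inn y x = adjm (inn x y)" using hm unfolding hilbert_opmod_def by (elim conjE) assumption
  then show ?thesis by blast
qed
lemma inn_zero: "inn x x = 0\<^sub>m mm mm \<Longrightarrow> x = 0"
proof -
  have "\<forall>x. inn x x = 0\<^sub>m mm mm \<longrightarrow> x = 0" using hm unfolding hilbert_opmod_def by (elim conjE) assumption
  then show "inn x x = 0\<^sub>m mm mm \<Longrightarrow> x = 0" by blast
qed

lemma V_prop: "V y \<in> Mcar ns ms" "x \<in> Mcar ns ms \<Longrightarrow> inn (W x) y = Minn ns ms x (V y)"
proof -
  have "W \<in> Ladj_ME ns ms inn" using st by (simp add: stinespring_module_def)
  then have ex: "\<exists>V. (\<forall>y. V y \<in> Mcar ns ms) \<and> (\<forall>x \<in> Mcar ns ms. \<forall>y. inn (W x) y = Minn ns ms x (V y))"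
    by (simp add: Ladj_ME_def)
  note S = someI_ex[OF ex, folded adjME_def]
  show "V y \<in> Mcar ns ms" using S by blast
  show "x \<in> Mcar ns ms \<Longrightarrow> inn (W x) y = Minn ns ms x (V y)" using S by blast
qed

lemma C_VW: "x \<in> Mcar ns ms \<Longrightarrow> C x = V (W x)"
  using st by (simp add: stinespring_module_def)

lemma C_Mcar: "x \<in> Mcar ns ms \<Longrightarrow> C x \<in> Mcar ns ms"
  using C_VW V_prop(1) by simp

lemma Minn_C: "a \<in> Mcar ns ms \<Longrightarrow> b \<in> Mcar ns ms \<Longrightarrow> Minn ns ms a (C b) = inn (W a) (W b)"
  using C_VW V_prop(2) by simp

lemma C_sa: assumes "a \<in> Mcar ns ms" "b \<in> Mcar ns ms"
  shows "Minn ns ms (C a) b = Minn ns ms a (C b)"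
proof -
  have "Minn ns ms (C a) b = adjm (Minn ns ms b (C a))"
    using Minn_adjm[OF assms(2) C_Mcar[OF assms(1)]] by simp
  also have "\<dots> = adjm (adjm (inn (W a) (W b)))"
    using Minn_C[OF assms(2,1)] inn_sym[of "W b" "W a"] by simp
  also have "\<dots> = inn (W a) (W b)" using adjm_adjm[OF inn_car] by simp
  finally show ?thesis using Minn_C[OF assms] by simp
qed

lemma Minn_z0: "x \<in> Mcar ns ms \<Longrightarrow> Minn ns ms x z0 = 0\<^sub>m mm mm"
proof -
  assume x: "x \<in> Mcar ns ms"
  note E = Minn_entry_M[OF x zero_Mcar]
  show ?thesis by (rule eq_matI) (use E in \<open>auto intro!: sum.neutral dest: Iset_D\<close>)
qed

lemma C_ker: assumes w: "w \<in> Mcar ns ms" and z: "C (C w) = z0" shows "C w = z0"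
proof -
  have "Minn ns ms (C w) (C w) = Minn ns ms w (C (C w))" using C_sa[OF w C_Mcar[OF w]] .
  also have "\<dots> = 0\<^sub>m mm mm" using z Minn_z0[OF w] by simp
  finally show ?thesis using Minn_self_zero[OF C_Mcar[OF w]] by simp
qed

lemma Phi_munit: "k < N \<Longrightarrow> i < N \<Longrightarrow> blk ns k = blk ns i \<Longrightarrow> Phi (munit N k i) \<in> carrier_mat mm mm"
proof -
  assume a: "k < N" "i < N" "blk ns k = blk ns i"
  have "\<forall>A \<in> bdalg ns. Phi A \<in> bdalg ms" using qc unfolding quantum_channel_def by (elim conjE) assumption
  then have "Phi (munit N k i) \<in> bdalg ms" using munit_bdalg[OF a] by blast
  then show ?thesis by (simp add: bdalg_def)
qed

lemma C_actk: assumes x: "x \<in> Mcar ns ms" shows "C x = actk N mm (kap ns ms Phi) x"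
proof
  fix i
  show "C x i = actk N mm (kap ns ms Phi) x i"
  proof (cases "i < N")
    case True
    let ?P = "\<lambda>k. blk ns k = blk ns i"
    let ?f = "\<lambda>k. x k * Phi (munit N k i)"
    have F: "\<And>k. k \<in> set (filter ?P [0..<N]) \<Longrightarrow> ?f k \<in> carrier_mat mm mm"
      using Mcar_carrier[OF x] Phi_munit True by (auto intro!: mult_carrier_mat)
    note M = msum_carrier_entry[of "filter ?P [0..<N]" ?f mm, OF F]
    have Ci: "C x i = msum mm (filter ?P [0..<N]) ?f" unfolding C_Phi_def using True by (simp only: if_True)
    show ?thesis
    proof (rule eq_matI)
      fix r c assume "r < dim_row (actk N mm (kap ns ms Phi) x i)" "c < dim_col (actk N mm (kap ns ms Phi) x i)"
      then have rc: "r < mm" "c < mm" using carrier_matD[OF actk_carrier[of N mm "kap ns ms Phi" x i]] by simp_all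
      have "C x i $$ (r,c) = (\<Sum>k\<in>{k\<in>{0..<N}. ?P k}. ?f k $$ (r,c))"
        using M rc Ci by (simp add: sum_list_distinct_conv_sum_set)
      also have "\<dots> = (\<Sum>k<N. if ?P k then ?f k $$ (r,c) else 0)"
        unfolding atLeast0LessThan by (rule sum.inter_filter) simp
      also have "\<dots> = (\<Sum>k<N. \<Sum>s<mm. x k $$ (r, s) * kap ns ms Phi (k,s) (i,c))"
      proof (rule sum.cong[OF refl])
        fix k assume k: "k \<in> {..<N}"
        show "(if ?P k then ?f k $$ (r,c) else 0) = (\<Sum>s<mm. x k $$ (r, s) * kap ns ms Phi (k,s) (i,c))"
        proof (cases "?P k")
          case True
          then show ?thesis using Mcar_carrier[OF x, of k] Phi_munit[of k i] k \<open>i < N\<close> rc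
            by (auto simp: kap_def scalar_prod_def atLeast0LessThan intro!: sum.cong)
        qed (simp add: kap_def)
      qed
      also have "\<dots> = actk N mm (kap ns ms Phi) x i $$ (r,c)"
        unfolding actk_entry[OF True rc] Iset_def sum.cartesian_product by (simp add: case_prod_beta)
      finally show "C x i $$ (r,c) = actk N mm (kap ns ms Phi) x i $$ (r,c)" .
    next
      show "dim_row (C x i) = dim_row (actk N mm (kap ns ms Phi) x i)"
        using carrier_matD[OF conjunct1[OF M]] carrier_matD[OF actk_carrier[of N mm "kap ns ms Phi" x i]] Ci by simp
      show "dim_col (C x i) = dim_col (actk N mm (kap ns ms Phi) x i)"
        using carrier_matD[OF conjunct1[OF M]] carrier_matD[OF actk_carrier[of N mm "kap ns ms Phi" x i]] Ci by simp
    qed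
  next
    case False
    have "C x i = 0\<^sub>m mm mm" unfolding C_Phi_def using False by (simp only: if_False)
    then show ?thesis using actk_out[OF False] by simp
  qed
qed

lemma Cp_Mcar: "x \<in> Mcar ns ms \<Longrightarrow> (C ^^ j) x \<in> Mcar ns ms"
  by (induct j) (auto intro: C_Mcar)

lemma Cp_actk: "x \<in> Mcar ns ms \<Longrightarrow> (C ^^ j) x = actk N mm (kpow (Iset N mm) (kap ns ms Phi) j) x"
proof (induct j)
  case 0
  then show ?case using actk_kid[of N x mm] Mcar_carrier[OF 0] Mcar_out[OF 0] by simp
next
  case (Suc j)
  have "(C ^^ Suc j) x = C ((C ^^ j) x)" by simp
  also have "\<dots> = actk N mm (kap ns ms Phi) ((C ^^ j) x)" using C_actk[OF Cp_Mcar[OF Suc.prems, of j]] .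
  also have "\<dots> = actk N mm (kap ns ms Phi) (actk N mm (kpow (Iset N mm) (kap ns ms Phi) j) x)"
    using Suc by simp
  also have "\<dots> = actk N mm (kpow (Iset N mm) (kap ns ms Phi) (Suc j)) x"
    by (simp only: kpow.simps actk_kmul)
  finally show ?case .
qed

lemma Cp_sa: "a \<in> Mcar ns ms \<Longrightarrow> b \<in> Mcar ns ms \<Longrightarrow> Minn ns ms ((C ^^ j) a) b = Minn ns ms a ((C ^^ j) b)"
proof (induct j arbitrary: b)
  case 0 then show ?case by simp
next
  case (Suc j)
  have "Minn ns ms ((C ^^ Suc j) a) b = Minn ns ms ((C ^^ j) a) (C b)"
    using C_sa[OF Cp_Mcar[OF Suc.prems(1)] Suc.prems(2)] by simp
  also have "\<dots> = Minn ns ms a ((C ^^ j) (C b))" using Suc.hyps[OF Suc.prems(1) C_Mcar[OF Suc.prems(2)]] .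
  also have "(C ^^ j) (C b) = (C ^^ Suc j) b" by (simp only: funpow_Suc_right comp_def)
  finally show ?case .
qed

end



lemma sum_split_least:
  fixes c f :: "nat \<Rightarrow> complex"
  assumes "r0 \<le> L" "\<forall>j<r0. c j = 0"
  shows "(\<Sum>j\<le>L. c j * f j) = c r0 * f r0 + (\<Sum>j<L - r0. c (Suc (r0 + j)) * f (Suc (r0 + j)))"
  using assms(1)
proof (induct L rule: dec_induct)
  case base
  have "(\<Sum>j\<le>r0. c j * f j) = (\<Sum>j<r0. c j * f j) + c r0 * f r0"
    by (simp add: lessThan_Suc_atMost[symmetric])
  also have "(\<Sum>j<r0. c j * f j) = 0" using assms(2) by simp
  finally show ?case by simp
next
  case (step L)
  have e: "Suc L - r0 = Suc (L - r0)" using step(1) by simp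
  have e2: "Suc (r0 + (L - r0)) = Suc L" using step(1) by simp
  show ?case unfolding e using step(3) e2 by (simp add: add.assoc)
qed

context stm
begin

lemma annih: "\<exists>c L. (\<exists>j\<le>L. c j \<noteq> 0) \<and> (\<forall>x\<in>Mcar ns ms. \<forall>i<N. \<forall>r<mm. \<forall>s<mm.
    (\<Sum>j\<le>L. c j * (C ^^ j) x i $$ (r,s)) = 0)"
proof -
  let ?I = "Iset N mm" and ?K = "kpow (Iset N mm) (kap ns ms Phi)"
  obtain c L where cL: "\<exists>j\<le>L. c j \<noteq> 0" "\<forall>a\<in>?I. \<forall>b\<in>?I. (\<Sum>j\<le>L. c j * ?K j a b) = 0"
    using kpow_dependent[OF finite_Iset] by blast
  have "(\<Sum>j\<le>L. c j * (C ^^ j) x i $$ (r,s)) = 0"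
    if x: "x \<in> Mcar ns ms" and irs: "i < N" "r < mm" "s < mm" for x i r s
  proof -
    have "(\<Sum>j\<le>L. c j * (C ^^ j) x i $$ (r,s)) =
        (\<Sum>j\<le>L. c j * (\<Sum>z\<in>?I. x (fst z) $$ (r, snd z) * ?K j z (i,s)))"
      using Cp_actk[OF x] actk_entry[OF irs] by simp
    also have "\<dots> = (\<Sum>j\<le>L. \<Sum>z\<in>?I. x (fst z) $$ (r, snd z) * (c j * ?K j z (i,s)))"
      by (simp add: sum_distrib_left mult.left_commute)
    also have "\<dots> = (\<Sum>z\<in>?I. \<Sum>j\<le>L. x (fst z) $$ (r, snd z) * (c j * ?K j z (i,s)))"
      by (rule sum.swap)
    also have "\<dots> = (\<Sum>z\<in>?I. x (fst z) $$ (r, snd z) * (\<Sum>j\<le>L. c j * ?K j z (i,s)))"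
      by (simp add: sum_distrib_left)
    also have "\<dots> = 0"
    proof (rule sum.neutral, rule ballI)
      fix z assume "z \<in> ?I"
      moreover have "(i,s) \<in> ?I" using irs by (simp add: Iset_def)
      ultimately show "x (fst z) $$ (r, snd z) * (\<Sum>j\<le>L. c j * ?K j z (i,s)) = 0" using cL(2) by simp
    qed
    finally show ?thesis .
  qed
  then show ?thesis using cL(1) by blast
qed

lemma tl_entry: "i < N \<Longrightarrow> r < mm \<Longrightarrow> s < mm \<Longrightarrow>
   tlc ns ms Phi d J x i $$ (r,s) = (\<Sum>j\<in>J. d j * (C ^^ j) x i $$ (r,s))"
  by (simp add: tlc_def)

lemma tl_Mcar: assumes x: "x \<in> Mcar ns ms" shows "tlc ns ms Phi d J x \<in> Mcar ns ms"
proof -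
  have "tlc ns ms Phi d J x i \<in> bdalg ms" if i: "i < N" for i
    unfolding bdalg_iff
  proof (intro conjI allI impI)
    show "tlc ns ms Phi d J x i \<in> carrier_mat mm mm" using i by (simp add: tlc_def)
    fix r s assume rs: "r < mm" "s < mm" "blk ms r \<noteq> blk ms s"
    have "(C ^^ j) x i $$ (r,s) = 0" for j
      using Cp_Mcar[OF x, of j] i rs unfolding Mcar_def bdalg_iff by blast
    then show "tlc ns ms Phi d J x i $$ (r,s) = 0" using tl_entry[OF i rs(1,2)] by simp
  qed
  moreover have "tlc ns ms Phi d J x i = 0\<^sub>m mm mm" if "\<not> i < N" for i
    using that by (simp add: tlc_def)
  ultimately show ?thesis unfolding Mcar_def by auto
qed

lemma Cp_tl: assumes x: "x \<in> Mcar ns ms" and irs: "i < N" "r < mm" "s < mm"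
  shows "(C ^^ n) (tlc ns ms Phi d J x) i $$ (r,s) = (\<Sum>j\<in>J. d j * (C ^^ (n + j)) x i $$ (r,s))"
proof -
  let ?K = "kpow (Iset N mm) (kap ns ms Phi) n"
  have "(C ^^ n) (tlc ns ms Phi d J x) i $$ (r,s) = actk N mm ?K (tlc ns ms Phi d J x) i $$ (r,s)"
    using Cp_actk[OF tl_Mcar[OF x]] by simp
  also have "\<dots> = (\<Sum>j\<in>J. d j * actk N mm ?K ((C ^^ j) x) i $$ (r,s))"
    by (rule actk_lin[OF _ irs]) (rule tl_entry)
  also have "\<dots> = (\<Sum>j\<in>J. d j * (C ^^ (n + j)) x i $$ (r,s))"
  proof (rule sum.cong[OF refl])
    fix j
    have "actk N mm ?K ((C ^^ j) x) = (C ^^ n) ((C ^^ j) x)" using Cp_actk[OF Cp_Mcar[OF x]] by simp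
    also have "\<dots> = (C ^^ (n + j)) x" by (simp add: funpow_add)
    finally show "d j * actk N mm ?K ((C ^^ j) x) i $$ (r,s) = d j * (C ^^ (n + j)) x i $$ (r,s)" by simp
  qed
  finally show ?thesis .
qed

lemma Cp_tsub: assumes a: "a \<in> Mcar ns ms" and b: "b \<in> Mcar ns ms" and irs: "i < N" "r < mm" "s < mm"
  shows "(C ^^ n) (tsub a b) i $$ (r,s) = (C ^^ n) a i $$ (r,s) - (C ^^ n) b i $$ (r,s)"
proof -
  let ?K = "kpow (Iset N mm) (kap ns ms Phi) n"
  let ?d = "\<lambda>j::nat. if j = 0 then 1 else (-1::complex)"
  let ?Y = "\<lambda>j::nat. if j = 0 then a else b"
  have hyp: "tsub a b i' $$ (r',s') = (\<Sum>j\<in>{0,1}. ?d j * ?Y j i' $$ (r',s'))"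
    if "i' < N" "r' < mm" "s' < mm" for i' r' s'
    using that Mcar_carrier[OF a, of i'] Mcar_carrier[OF b, of i'] by (simp add: tsub_def)
  have "(C ^^ n) (tsub a b) i $$ (r,s) = actk N mm ?K (tsub a b) i $$ (r,s)"
    using Cp_actk[OF tsub_Mcar[OF a b]] by simp
  also have "\<dots> = (\<Sum>j\<in>{0,1}. ?d j * actk N mm ?K (?Y j) i $$ (r,s))"
    by (rule actk_lin[OF _ irs]) (rule hyp)
  also have "\<dots> = actk N mm ?K a i $$ (r,s) - actk N mm ?K b i $$ (r,s)" by simp
  also have "\<dots> = (C ^^ n) a i $$ (r,s) - (C ^^ n) b i $$ (r,s)"
    using Cp_actk[OF a] Cp_actk[OF b] by simp
  finally show ?thesis .
qed

lemma tl_adj: assumes a: "a \<in> Mcar ns ms" and b: "b \<in> Mcar ns ms"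
  shows "Minn ns ms (tlc ns ms Phi d J a) b = Minn ns ms a (tlc ns ms Phi (\<lambda>j. cnj (d j)) J b)"
proof -
  let ?I = "Iset N mm"
  let ?Q = "tlc ns ms Phi d J a" and ?Q' = "tlc ns ms Phi (\<lambda>j. cnj (d j)) J b"
  note E1 = Minn_entry_M[OF tl_Mcar[OF a] b]
  note E2 = Minn_entry_M[OF a tl_Mcar[OF b]]
  show ?thesis
  proof (rule eq_matI)
    fix r c assume "r < dim_row (Minn ns ms a ?Q')" "c < dim_col (Minn ns ms a ?Q')"
    then have rc: "r < mm" "c < mm" using carrier_matD[OF E2(1)] by simp_all
    have "Minn ns ms ?Q b $$ (r,c) =
       (\<Sum>z\<in>?I. b (fst z) $$ (r, snd z) * cnj (\<Sum>j\<in>J. d j * (C ^^ j) a (fst z) $$ (c, snd z)))"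
      unfolding E1(2)[OF rc]
      by (rule sum.cong[OF refl]) (use Iset_D rc tl_entry in simp)
    also have "\<dots> = (\<Sum>z\<in>?I. \<Sum>j\<in>J. cnj (d j) * (b (fst z) $$ (r, snd z) * cnj ((C ^^ j) a (fst z) $$ (c, snd z))))"
      by (simp add: cnj_sum sum_distrib_left mult.left_commute)
    also have "\<dots> = (\<Sum>j\<in>J. \<Sum>z\<in>?I. cnj (d j) * (b (fst z) $$ (r, snd z) * cnj ((C ^^ j) a (fst z) $$ (c, snd z))))"
      by (rule sum.swap)
    also have "\<dots> = (\<Sum>j\<in>J. cnj (d j) * Minn ns ms ((C ^^ j) a) b $$ (r,c))"
      by (simp add: Minn_entry_M(2)[OF Cp_Mcar[OF a] b rc] sum_distrib_left)
    also have "\<dots> = (\<Sum>j\<in>J. cnj (d j) * Minn ns ms a ((C ^^ j) b) $$ (r,c))"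
      using Cp_sa[OF a b] by simp
    also have "\<dots> = (\<Sum>j\<in>J. \<Sum>z\<in>?I. cnj (d j) * ((C ^^ j) b (fst z) $$ (r, snd z) * cnj (a (fst z) $$ (c, snd z))))"
      by (simp add: Minn_entry_M(2)[OF a Cp_Mcar[OF b] rc] sum_distrib_left)
    also have "\<dots> = (\<Sum>z\<in>?I. \<Sum>j\<in>J. cnj (d j) * ((C ^^ j) b (fst z) $$ (r, snd z) * cnj (a (fst z) $$ (c, snd z))))"
      by (rule sum.swap)
    also have "\<dots> = (\<Sum>z\<in>?I. (\<Sum>j\<in>J. cnj (d j) * (C ^^ j) b (fst z) $$ (r, snd z)) * cnj (a (fst z) $$ (c, snd z)))"
      by (simp add: sum_distrib_right mult.assoc)
    also have "\<dots> = Minn ns ms a ?Q' $$ (r,c)"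
      unfolding E2(2)[OF rc]
      by (rule sum.cong[OF refl]) (use Iset_D rc tl_entry in simp)
    finally show "Minn ns ms ?Q b $$ (r,c) = Minn ns ms a ?Q' $$ (r,c)" .
  qed (use carrier_matD[OF E1(1)] carrier_matD[OF E2(1)] in simp_all)
qed

lemma descend: "w \<in> Mcar ns ms \<Longrightarrow> (C ^^ Suc n) w = z0 \<Longrightarrow> C w = z0"
proof (induct n)
  case 0 then show ?case by simp
next
  case (Suc n)
  have "C (C ((C ^^ n) w)) = z0" using Suc.prems(2) by simp
  then have "C ((C ^^ n) w) = z0" by (rule C_ker[OF Cp_Mcar[OF Suc.prems(1)]])
  then show ?case using Suc by simp
qed

lemma pinv: "\<exists>d J. finite J \<and> (\<forall>x\<in>Mcar ns ms. C (tlc ns ms Phi d J (C x)) = C x)"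
proof -
  obtain c L where cL: "\<exists>j\<le>L. c j \<noteq> 0" and rel: "\<forall>x\<in>Mcar ns ms. \<forall>i<N. \<forall>r<mm. \<forall>s<mm.
    (\<Sum>j\<le>L. c j * (C ^^ j) x i $$ (r,s)) = 0" using annih by blast
  define r0 where "r0 = (LEAST j. c j \<noteq> 0)"
  obtain j0 where j0: "j0 \<le> L" "c j0 \<noteq> 0" using cL by blast
  have cr0: "c r0 \<noteq> 0" unfolding r0_def by (rule LeastI[of "\<lambda>j. c j \<noteq> 0", OF j0(2)])
  have "r0 \<le> j0" unfolding r0_def by (rule Least_le[of "\<lambda>j. c j \<noteq> 0", OF j0(2)])
  then have r0L: "r0 \<le> L" using j0(1) by simp
  have below: "\<forall>j<r0. c j = 0" unfolding r0_def using not_less_Least by blast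
  define J where "J = {..<L - r0}"
  define d where "d j = - c (Suc (r0 + j)) / c r0" for j
  let ?Q = "tlc ns ms Phi d J"
  have A: "(C ^^ Suc r0) (?Q x) = (C ^^ r0) x" if x: "x \<in> Mcar ns ms" for x
  proof (rule Mcar_eqI[OF Cp_Mcar[OF tl_Mcar[OF x]] Cp_Mcar[OF x]])
    fix i r s assume irs: "i < N" "r < mm" "s < mm"
    define e where "e t = (C ^^ t) x i $$ (r,s)" for t
    define S where "S = (\<Sum>j<L - r0. c (Suc (r0 + j)) * e (Suc (r0 + j)))"
    have "c r0 * e r0 + S = 0"
      using rel x irs sum_split_least[OF r0L below, of e] unfolding S_def e_def by simp
    then have S: "S = - (c r0 * e r0)" by (simp add: eq_neg_iff_add_eq_0 add.commute)
    have "(C ^^ Suc r0) (?Q x) i $$ (r,s) = (\<Sum>j\<in>J. d j * (C ^^ (Suc r0 + j)) x i $$ (r,s))"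
      by (rule Cp_tl[OF x irs])
    also have "\<dots> = (\<Sum>j\<in>J. d j * e (Suc (r0 + j)))"
      by (simp only: e_def add_Suc)
    also have "\<dots> = (\<Sum>j\<in>J. c (Suc (r0 + j)) * e (Suc (r0 + j)) * (-1 / c r0))"
      unfolding d_def by (rule sum.cong[OF refl]) simp
    also have "\<dots> = S * (-1 / c r0)"
      unfolding S_def J_def by (simp only: sum_distrib_right)
    also have "\<dots> = e r0" using S cr0 by simp
    finally show "(C ^^ Suc r0) (?Q x) i $$ (r,s) = (C ^^ r0) x i $$ (r,s)" by (simp add: e_def)
  qed
  have B: "C (?Q (C x)) = C x" if x: "x \<in> Mcar ns ms" for x
  proof -
    have Cx: "C x \<in> Mcar ns ms" using C_Mcar[OF x] .
    let ?w = "tsub x (?Q (C x))"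
    have w: "?w \<in> Mcar ns ms" using tsub_Mcar[OF x tl_Mcar[OF Cx]] .
    have "(C ^^ Suc r0) ?w = z0"
    proof (rule Mcar_eqI[OF Cp_Mcar[OF w] zero_Mcar])
      fix i r s assume irs: "i < N" "r < mm" "s < mm"
      have "(C ^^ Suc r0) ?w i $$ (r,s) = (C ^^ Suc r0) x i $$ (r,s) - (C ^^ Suc r0) (?Q (C x)) i $$ (r,s)"
        by (rule Cp_tsub[OF x tl_Mcar[OF Cx] irs])
      also have "(C ^^ Suc r0) (?Q (C x)) = (C ^^ r0) (C x)" by (rule A[OF Cx])
      also have "(C ^^ r0) (C x) = (C ^^ Suc r0) x" by (simp only: funpow_Suc_right comp_def)
      finally show "(C ^^ Suc r0) ?w i $$ (r,s) = z0 i $$ (r,s)" using irs by simp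
    qed
    then have Cw: "C ?w = z0" by (rule descend[OF w])
    show ?thesis
    proof (rule Mcar_eqI[OF C_Mcar[OF tl_Mcar[OF Cx]] Cx])
      fix i r s assume irs: "i < N" "r < mm" "s < mm"
      have "(C ^^ 1) ?w i $$ (r,s) = (C ^^ 1) x i $$ (r,s) - (C ^^ 1) (?Q (C x)) i $$ (r,s)"
        by (rule Cp_tsub[OF x tl_Mcar[OF Cx] irs])
      then have "0 = C x i $$ (r,s) - C (?Q (C x)) i $$ (r,s)" using Cw irs by simp
      then show "C (?Q (C x)) i $$ (r,s) = C x i $$ (r,s)" by simp
    qed
  qed
  have "finite J" by (simp add: J_def)
  then show ?thesis using B by blast
qed

lemma inn_diff2: assumes "r < mm" "c < mm"
  shows "inn x (y - z) $$ (r,c) = inn x y $$ (r,c) - inn x z $$ (r,c)"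
proof -
  have "inn x y = inn x (y - z) + inn x z" using inn_add[of x "y - z" z] by simp
  then have "inn x y $$ (r,c) = inn x (y - z) $$ (r,c) + inn x z $$ (r,c)"
    using assms carrier_matD[OF inn_car[of x z]] by simp
  then show ?thesis by simp
qed

lemma inn_diff1: assumes "r < mm" "c < mm"
  shows "inn (y - z) x $$ (r,c) = inn y x $$ (r,c) - inn z x $$ (r,c)"
proof -
  have "inn (y - z) x $$ (r,c) = cnj (inn x (y - z) $$ (c,r))"
    using inn_sym[of "y - z" x] carrier_matD[OF inn_car[of x "y - z"]] assms by (simp add: adjm_index)
  also have "\<dots> = cnj (inn x y $$ (c,r)) - cnj (inn x z $$ (c,r))" using inn_diff2[OF assms(2,1)] by simp
  also have "\<dots> = inn y x $$ (r,c) - inn z x $$ (r,c)"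
    using inn_sym[of y x] inn_sym[of z x] carrier_matD[OF inn_car[of x y]] carrier_matD[OF inn_car[of x z]] assms
    by (simp add: adjm_index)
  finally show ?thesis .
qed

lemma W_key:
  assumes pq: "\<forall>x\<in>Mcar ns ms. C (tlc ns ms Phi d J (C x)) = C x" and z: "z \<in> Mcar ns ms"
  shows "W (tlc ns ms Phi d J (C z)) = W z"
proof -
  let ?y = "tlc ns ms Phi d J (C z)"
  have y: "?y \<in> Mcar ns ms" using tl_Mcar[OF C_Mcar[OF z]] .
  let ?a = "W ?y" and ?b = "W z"
  have aa: "inn ?a ?a = Minn ns ms ?y (C z)" using Minn_C[OF y y] pq z by simp
  have ab: "inn ?a ?b = Minn ns ms ?y (C z)" using Minn_C[OF y z] by simp
  have ba: "inn ?b ?a = Minn ns ms z (C z)" using Minn_C[OF z y] pq z by simp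
  have bb: "inn ?b ?b = Minn ns ms z (C z)" using Minn_C[OF z z] by simp
  have "inn (?a - ?b) (?a - ?b) = 0\<^sub>m mm mm"
  proof (rule eq_matI)
    fix r c assume "r < dim_row (0\<^sub>m mm mm :: complex mat)" "c < dim_col (0\<^sub>m mm mm :: complex mat)"
    then have rc: "r < mm" "c < mm" by simp_all
    have "inn (?a - ?b) (?a - ?b) $$ (r,c) =
        (inn ?a ?a $$ (r,c) - inn ?a ?b $$ (r,c)) - (inn ?b ?a $$ (r,c) - inn ?b ?b $$ (r,c))"
      using inn_diff1[OF rc] inn_diff2[OF rc] by simp
    also have "\<dots> = 0" using aa ab ba bb by simp
    finally show "inn (?a - ?b) (?a - ?b) $$ (r,c) = 0\<^sub>m mm mm $$ (r,c)" using rc by simp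
  qed (use carrier_matD[OF inn_car[of "?a - ?b" "?a - ?b"]] in simp_all)
  then have "?a - ?b = 0" by (rule inn_zero)
  then show ?thesis by simp
qed

end



lemma compress_sub:
  assumes A: "stm ns ms Phi smul act inn W" and B: "stm ns ms Phi smul' act' inn' W'"
  shows "compress ns ms inn W \<subseteq> compress ns ms inn' W'"
proof
  interpret A: stm ns ms Phi smul act inn W by (rule A)
  interpret B: stm ns ms Phi smul' act' inn' W' by (rule B)
  let ?M = "Mcar ns ms"
  let ?C = "C_Phi ns ms Phi"
  let ?V = "adjME ns ms inn W" and ?V' = "adjME ns ms inn' W'"
  fix F assume "F \<in> compress ns ms inn W"
  then obtain T where T: "T \<in> adjointable inn" and F: "F = restrict (\<lambda>x. ?V (T (W x))) ?M"
    unfolding compress_def by blast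
  obtain S where S: "\<And>x y. inn (T x) y = inn x (S y)" using T unfolding adjointable_def by blast
  obtain d J where dJ: "finite J" "\<forall>x\<in>?M. ?C (tlc ns ms Phi d J (?C x)) = ?C x" using A.pinv by blast
  let ?Q = "tlc ns ms Phi d J" and ?Q' = "tlc ns ms Phi (\<lambda>j. cnj (d j)) J"
  have Qadj1: "Minn ns ms (?Q a) b = Minn ns ms a (?Q' b)" if "a \<in> ?M" "b \<in> ?M" for a b
    using A.tl_adj[OF that] .
  have Qadj2: "Minn ns ms (?Q' a) b = Minn ns ms a (?Q b)" if "a \<in> ?M" "b \<in> ?M" for a b
    using A.tl_adj[OF that, of "\<lambda>j. cnj (d j)" J] by simp
  define R where "R y = W (?Q (?V' y))" for y
  define Rs where "Rs u = W' (?Q' (?V u))" for u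
  define T' where "T' y = Rs (T (R y))" for y
  define S' where "S' y = Rs (S (R y))" for y
  have RsR: "inn' (Rs u) b = inn u (R b)" for u b
  proof -
    have Vu: "?V u \<in> ?M" by (rule A.V_prop(1))
    have Vb: "?V' b \<in> ?M" by (rule B.V_prop(1))
    have "inn' (Rs u) b = Minn ns ms (?Q' (?V u)) (?V' b)"
      unfolding Rs_def by (rule B.V_prop(2)[OF A.tl_Mcar[OF Vu]])
    also have "\<dots> = Minn ns ms (?V u) (?Q (?V' b))" by (rule Qadj2[OF Vu Vb])
    also have "\<dots> = adjm (Minn ns ms (?Q (?V' b)) (?V u))"
      by (rule Minn_adjm[symmetric, OF A.tl_Mcar[OF Vb] Vu])
    also have "\<dots> = adjm (inn (R b) u)" unfolding R_def using A.V_prop(2)[OF A.tl_Mcar[OF Vb]] by simp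
    also have "\<dots> = inn u (R b)" using A.inn_sym[of u "R b"] by simp
    finally show ?thesis .
  qed
  have RRs: "inn (R a) v = inn' a (Rs v)" for a v
    using RsR[of v a] A.inn_sym[of "R a" v] B.inn_sym[of a "Rs v"] by simp
  have T'adj: "T' \<in> adjointable inn'"
    unfolding adjointable_def
  proof (intro CollectI exI allI)
    fix a b
    have "inn' (T' a) b = inn (T (R a)) (R b)" unfolding T'_def by (rule RsR)
    also have "\<dots> = inn (R a) (S (R b))" by (rule S)
    also have "\<dots> = inn' a (S' b)" unfolding S'_def by (rule RRs)
    finally show "inn' (T' a) b = inn' a (S' b)" .
  qed
  have key: "?V' (T' (W' x)) = ?V (T (W x))" if x: "x \<in> ?M" for x
  proof (rule Minn_nondeg[OF B.V_prop(1) A.V_prop(1)])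
    fix z assume z: "z \<in> ?M"
    define u where "u = ?V (T (R (W' x)))"
    have u: "u \<in> ?M" unfolding u_def by (rule A.V_prop(1))
    have RW: "R (W' x) = W x"
    proof -
      have "R (W' x) = W (?Q (?C x))" unfolding R_def using B.C_VW[OF x] by simp
      also have "\<dots> = W x" by (rule A.W_key[OF dJ(2) x])
      finally show ?thesis .
    qed
    have "Minn ns ms z (?V' (T' (W' x))) = inn' (W' z) (T' (W' x))" by (rule B.V_prop(2)[symmetric, OF z])
    also have "\<dots> = inn' (W' z) (W' (?Q' u))" unfolding T'_def Rs_def u_def ..
    also have "\<dots> = Minn ns ms z (?V' (W' (?Q' u)))" by (rule B.V_prop(2)[OF z])
    also have "\<dots> = Minn ns ms z (?C (?Q' u))" using B.C_VW[OF A.tl_Mcar[OF u]] by simp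
    also have "\<dots> = Minn ns ms (?C z) (?Q' u)" by (rule A.C_sa[symmetric, OF z A.tl_Mcar[OF u]])
    also have "\<dots> = Minn ns ms (?Q (?C z)) u" by (rule Qadj1[symmetric, OF A.C_Mcar[OF z] u])
    also have "\<dots> = inn (W (?Q (?C z))) (T (R (W' x)))"
      unfolding u_def by (rule A.V_prop(2)[symmetric, OF A.tl_Mcar[OF A.C_Mcar[OF z]]])
    also have "\<dots> = inn (W z) (T (W x))" using A.W_key[OF dJ(2) z] RW by simp
    also have "\<dots> = Minn ns ms z (?V (T (W x)))" by (rule A.V_prop(2)[OF z])
    finally show "Minn ns ms z (?V' (T' (W' x))) = Minn ns ms z (?V (T (W x)))" .
  qed
  have "F = restrict (\<lambda>x. ?V' (T' (W' x))) ?M"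
    unfolding F using key by (intro restrict_ext) simp
  then show "F \<in> compress ns ms inn' W'"
    unfolding compress_def using T'adj by blast
qed

lemma compress_Ladj:
  assumes A: "stm ns ms Phi smul act inn W"
  shows "compress ns ms inn W \<subseteq> Ladj_M ns ms"
proof
  interpret A: stm ns ms Phi smul act inn W by (rule A)
  let ?M = "Mcar ns ms"
  let ?V = "adjME ns ms inn W"
  fix F assume "F \<in> compress ns ms inn W"
  then obtain T where T: "T \<in> adjointable inn" and F: "F = restrict (\<lambda>x. ?V (T (W x))) ?M"
    unfolding compress_def by blast
  obtain S where S: "\<And>x y. inn (T x) y = inn x (S y)" using T unfolding adjointable_def by blast
  have ext: "F \<in> extensional ?M" unfolding F by simp
  have img: "F ` ?M \<subseteq> ?M" unfolding F using A.V_prop(1) by auto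
  have img2: "(\<lambda>y. ?V (S (W y))) ` ?M \<subseteq> ?M" using A.V_prop(1) by auto
  have adj: "Minn ns ms (F x) y = Minn ns ms x (?V (S (W y)))" if x: "x \<in> ?M" and y: "y \<in> ?M" for x y
  proof -
    have "Minn ns ms (F x) y = Minn ns ms (?V (T (W x))) y" unfolding F using x by simp
    also have "\<dots> = adjm (Minn ns ms y (?V (T (W x))))" by (rule Minn_adjm[symmetric, OF y A.V_prop(1)])
    also have "\<dots> = adjm (inn (W y) (T (W x)))" using A.V_prop(2)[OF y] by simp
    also have "\<dots> = inn (T (W x)) (W y)" using A.inn_sym[of "T (W x)" "W y"] by simp
    also have "\<dots> = inn (W x) (S (W y))" by (rule S)
    also have "\<dots> = Minn ns ms x (?V (S (W y)))" by (rule A.V_prop(2)[OF x])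
    finally show ?thesis .
  qed
  show "F \<in> Ladj_M ns ms" unfolding Ladj_M_def using ext img img2 adj by blast
qed

theorem proposition3p12:
  fixes ns ms :: "nat list"
    and Phi :: "complex mat \<Rightarrow> complex mat"
    and smul :: "complex \<Rightarrow> 'e::ab_group_add \<Rightarrow> 'e" and act :: "'e \<Rightarrow> complex mat \<Rightarrow> 'e"
    and inn :: "'e \<Rightarrow> 'e \<Rightarrow> complex mat" and W :: "(nat \<Rightarrow> complex mat) \<Rightarrow> 'e"
    and smul' :: "complex \<Rightarrow> 'f::ab_group_add \<Rightarrow> 'f" and act' :: "'f \<Rightarrow> complex mat \<Rightarrow> 'f"
    and inn' :: "'f \<Rightarrow> 'f \<Rightarrow> complex mat" and W' :: "(nat \<Rightarrow> complex mat) \<Rightarrow> 'f"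
  assumes "quantum_channel ns ms Phi"
    and "stinespring_module ns ms Phi smul act inn W"
    and "stinespring_module ns ms Phi smul' act' inn' W'"
  shows "compress ns ms inn W = compress ns ms inn' W' \<and> compress ns ms inn W \<subseteq> Ladj_M ns ms"
proof -
  have A: "stm ns ms Phi smul act inn W" using assms(1,2) by (simp add: stm_def)
  have B: "stm ns ms Phi smul' act' inn' W'" using assms(1,3) by (simp add: stm_def)
  show ?thesis using compress_sub[OF A B] compress_sub[OF B A] compress_Ladj[OF A] by blast
qed


end
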